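(* There exist constants $k>0$ and $\epsilon>0$ such that for every finite non-empty set $J$ of vertices of the hexacarpet $H$, $|\partial J|\ge k|J|^{\epsilon}$. Here $\partial J$ is the set of edges of $H$ with exactly one endpoint in $J$.
   Context: Barycentric subdivisions: $T_0$ is an equilateral triangle with vertices $v_0,v_1,v_2$. $T_n$ is obtained by subdividing every triangular face $\{x,y,z\}$ of $T_{n-1}$ into the six triangles $\{x,m_{xy},c\},\{m_{xy},y,c\},\{y,m_{yz},c\},\{m_{yz},z,c\},\{z,m_{zx},c\},\{m_{zx},x,c\}$, where $m_{uv}$ are side midpoints and $c$ is the barycenter. $H_n$ is the graph whose vertices are the $6^n$ triangular faces of $T_n$, with an edge between two faces for each side they share. This is the planar dual of $T_n$ with the vertex for the unbounded face deleted. $H_{n+1}$ consists of six copies of $H_n$, one per face of $T_1$. $H_n$ is identified with the copy corresponding to the face $\{v_0,b_{01},b\}$ of $T_1$, where $b_{01}$ is the midpoint of $v_0v_1$ and $b$ is the barycenter. The hexacarpet $H$ is the increasing union of the $H_n$. *)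

theory Defs
  imports Complex_Main
begin

definition hv0 :: complex where "hv0 = 0"
definition hv1 :: complex where "hv1 = 1"
definition hv2 :: complex where "hv2 = Complex (1/2) (sqrt 3 / 2)"

definition subdiv :: "complex \<times> complex \<times> complex \<Rightarrow> (complex \<times> complex \<times> complex) set" where
  "subdiv t = (case t of (x, y, z) \<Rightarrow>
     (let mxy = (x + y) / 2; myz = (y + z) / 2; mzx = (z + x) / 2; c = (x + y + z) / 3 in
      {(x, mxy, c), (mxy, y, c), (y, myz, c), (myz, z, c), (z, mzx, c), (mzx, x, c)}))"

primrec Ttri :: "nat \<Rightarrow> (complex \<times> complex \<times> complex) set" where
  "Ttri 0 = {(hv0, hv1, hv2)}"
| "Ttri (Suc n) = \<Union> (subdiv ` Ttri n)"

text \<open>Faces of T_n, a face being its set of three vertices. These are the vertices of H_n;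
two faces are adjacent in H_n iff they share a side, i.e. two vertices.\<close>
definition faces :: "nat \<Rightarrow> complex set set" where
  "faces n = (\<lambda>(x, y, z). {x, y, z}) ` Ttri n"

text \<open>The affine (here linear, since v0 = 0) map sending v0, v1, v2 to v0, b01, b,
where b01 = (v0+v1)/2 and b = (v0+v1+v2)/3. It maps T_n onto the subdivision of
the face {v0,b01,b} of T_1 inside T_(n+1), realising the identification of H_n
with the corresponding copy in H_(n+1).  A point z = s v1 + t v2 is sent to
s b01 + t b.\<close>
definition Lmap :: "complex \<Rightarrow> complex" where
  "Lmap z = complex_of_real (Re z - Im z / sqrt 3) * ((hv0 + hv1) / 2)
          + complex_of_real (2 * Im z / sqrt 3) * ((hv0 + hv1 + hv2) / 3)"

text \<open>Vertices of the hexacarpet H = increasing union of the H_n: rescale H_n back by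
the inverse of Lmap^n, i.e. f is a vertex iff Lmap^n maps f to a face of T_n for some n.\<close>
definition hexV :: "complex set set" where
  "hexV = {f. \<exists>n. (Lmap ^^ n) ` f \<in> faces n}"

definition hex_adj :: "complex set \<Rightarrow> complex set \<Rightarrow> bool" where
  "hex_adj f g \<longleftrightarrow> f \<in> hexV \<and> g \<in> hexV \<and> f \<noteq> g \<and> card (f \<inter> g) = 2"

definition edge_boundary :: "complex set set \<Rightarrow> complex set set set" where
  "edge_boundary J = {{f, g} | f g. hex_adj f g \<and> f \<in> J \<and> g \<notin> J}"

end

theory Submission
  imports Defs
begin


type_synonym tri = "complex \<times> complex \<times> complex"

definition orr :: "complex \<Rightarrow> complex \<Rightarrow> complex \<Rightarrow> real" where
  "orr a b c = (Re b - Re a) * (Im c - Im a) - (Im b - Im a) * (Re c - Re a)"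

fun ort :: "tri \<Rightarrow> real" where "ort (a,b,c) = orr a b c"
fun ins :: "tri \<Rightarrow> complex \<Rightarrow> bool" where
  "ins (a,b,c) p = (orr a b p > 0 \<and> orr b c p > 0 \<and> orr c a p > 0)"
fun rot :: "tri \<Rightarrow> tri" where "rot (a,b,c) = (b,c,a)"
fun fc :: "tri \<Rightarrow> complex set" where "fc (a,b,c) = {a,b,c}"
fun bc :: "tri \<Rightarrow> complex" where "bc (a,b,c) = (a+b+c)/3"

fun ch :: "nat \<Rightarrow> tri \<Rightarrow> tri" where
  "ch i (x,y,z) = (if i = 0 then (x, (x+y)/2, (x+y+z)/3)
     else if i = 1 then ((x+y)/2, y, (x+y+z)/3)
     else if i = 2 then (y, (y+z)/2, (x+y+z)/3)
     else if i = 3 then ((y+z)/2, z, (x+y+z)/3)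
     else if i = 4 then (z, (z+x)/2, (x+y+z)/3)
     else ((z+x)/2, x, (x+y+z)/3))"

lemma orr_child_simps:
  "orr x ((x+y)/2) p = orr x y p / 2"
  unfolding orr_def by (simp add: field_simps)

lemma ort_ch: "ort (ch i t) = ort t / 6"
  by (cases t) (auto simp: orr_def field_simps)

lemma ins_ch: "ins (ch i t) p \<Longrightarrow> ins t p"
  apply (cases t)
  apply (auto simp: orr_def field_simps split: if_splits)
  done


lemma ins_ch_disj: "ins (ch i t) p \<Longrightarrow> ins (ch j t) p \<Longrightarrow> i < 6 \<Longrightarrow> j < 6 \<Longrightarrow> i = j"
  apply (cases t)
  apply (auto simp: orr_def field_simps split: if_splits)
  done

lemma ins_bc: "ort t > 0 \<Longrightarrow> ins t (bc t)"
  by (cases t) (auto simp: orr_def field_simps)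


lemma ort_rot[simp]: "ort (rot t) = ort t"
  by (cases t) (simp add: orr_def algebra_simps)
lemma ins_rot[simp]: "ins (rot t) = ins t"
  by (cases t) (auto simp: fun_eq_iff)
lemma fc_rot[simp]: "fc (rot t) = fc t"
  by (cases t) auto
lemma rot3[simp]: "rot (rot (rot t)) = t"
  by (cases t) auto

lemma orr_swap: "orr b a c = - orr a b c" "orr a c b = - orr a b c"
  by (simp_all add: orr_def algebra_simps)
lemma orr_cyc: "orr b c a = orr a b c"
  by (simp add: orr_def algebra_simps)
lemma orr_deg: "orr a a c = 0" "orr a b a = 0" "orr a b b = 0"
  by (simp_all add: orr_def algebra_simps)

lemma fc_eq_rot:
  assumes "ort u > 0" "ort v > 0" "fc u = fc v"
  shows "v = u \<or> v = rot u \<or> v = rot (rot u)"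
proof -
  obtain a b c where u: "u = (a,b,c)" by (cases u)
  obtain a' b' c' where v: "v = (a',b',c')" by (cases v)
  have d: "a \<noteq> b" "b \<noteq> c" "a \<noteq> c" using assms(1) u by (auto simp: orr_deg)
  have e: "{a,b,c} = {a',b',c'}" using assms(3) u v by simp
  have d': "a' \<noteq> b'" "b' \<noteq> c'" "a' \<noteq> c'" using assms(2) v by (auto simp: orr_deg)
  from e d d' have m: "a' = a \<or> a' = b \<or> a' = c" "b' = a \<or> b' = b \<or> b' = c"
    "c' = a \<or> c' = b \<or> c' = c" by blast+
  have o: "orr a b c > 0" "orr a' b' c' > 0" using assms(1,2) u v by auto
  have n1: "orr a c b < 0" "orr b a c < 0" "orr c b a < 0"
    using o(1) by (simp_all add: orr_def algebra_simps)
  have "(a',b',c') = (a,b,c) \<or> (a',b',c') = (b,c,a) \<or> (a',b',c') = (c,a,b)"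
  proof -
    have "(a',b',c') \<in> {(a,b,c),(a,c,b),(b,a,c),(b,c,a),(c,a,b),(c,b,a)}"
      using m d' by auto
    moreover have "(a',b',c') \<noteq> (a,c,b)" "(a',b',c') \<noteq> (b,a,c)" "(a',b',c') \<noteq> (c,b,a)"
      using n1 o(2) by auto
    ultimately show ?thesis by blast
  qed
  then show ?thesis using u v by auto
qed

lemma fc_eq_ins: "ort u > 0 \<Longrightarrow> ort v > 0 \<Longrightarrow> fc u = fc v \<Longrightarrow> ins v = ins u"
  using fc_eq_rot[of u v] by auto

lemma adj_card:
  assumes "orr x y z > 0" "orr y x w > 0"
  shows "card ({x,y,z} \<inter> {y,x,w}) = 2"
proof -
  have "x \<noteq> y" using assms(1) orr_deg(1)[of x z] by force
  moreover have "z \<noteq> x" using assms(1) orr_deg(2)[of x y] by force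
  moreover have "z \<noteq> y" using assms(1) orr_deg(3)[of x y] by force
  moreover have "w \<noteq> x" using assms(2) orr_deg(3)[of y x] by force
  moreover have "w \<noteq> y" using assms(2) orr_deg(2)[of y x] by force
  moreover have "z \<noteq> w" using assms orr_swap(1)[of y x z] by force
  ultimately have "{x,y,z} \<inter> {y,x,w} = {x,y}" "x \<noteq> y" by auto
  then show ?thesis by simp
qed

lemma orr_affine: "orr u v (of_real (1-t) * m + of_real t * w) = (1-t) * orr u v m + t * orr u v w"
  by (simp add: orr_def algebra_simps)

lemma orr_mid: "orr b w ((a+b)/2) = orr a b w / 2" "orr w a ((a+b)/2) = orr a b w / 2"
    "orr a b ((a+b)/2) = 0"
  by (simp_all add: orr_def field_simps)

lemma overlap:
  assumes "orr a b w > 0" "orr a b w' > 0"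
  shows "\<exists>p. ins (a,b,w) p \<and> ins (a,b,w') p"
proof -
  define m where "m = (a+b)/2"
  define D where "D = orr a b w' / 2"
  define K where "K = \<bar>orr b w' w\<bar> + \<bar>orr w' a w\<bar> + 1"
  have D: "D > 0" using assms D_def by simp
  have K: "K \<ge> 1" unfolding K_def by simp
  define t where "t = D / (2 * (D + K))"
  have t0: "t > 0" using D K unfolding t_def by simp
  have t1: "t \<le> 1/2" using D K unfolding t_def by (simp add: field_simps)
  have tK: "t * K < D / 2" using D K unfolding t_def by (simp add: field_simps)
  define p where "p = of_real (1-t) * m + of_real t * w"
  have 1: "orr a b p > 0" unfolding p_def orr_affine m_def using orr_mid(3)[of a b] t0 t1 assms
    by simp
  have 2: "orr b w p > 0" unfolding p_def orr_affine m_def using orr_mid(1)[of b w a] t0 t1 assms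
    by (simp add: orr_deg)
  have 3: "orr w a p > 0" unfolding p_def orr_affine m_def using orr_mid(2)[of w a b] t0 t1 assms
    by (simp add: orr_deg)
  have a4: "orr b w' p = (1-t) * D + t * orr b w' w" unfolding p_def orr_affine m_def D_def
    using orr_mid(1)[of b w' a] by simp
  have a5: "orr w' a p = (1-t) * D + t * orr w' a w" unfolding p_def orr_affine m_def D_def
    using orr_mid(2)[of w' a b] by simp
  have k1: "orr b w' w \<ge> -K" "orr w' a w \<ge> -K" unfolding K_def by arith+
  have k2: "t * orr b w' w \<ge> t * (-K)" "t * orr w' a w \<ge> t * (-K)"
    using mult_left_mono[OF k1(1), of t] mult_left_mono[OF k1(2), of t] t0 by simp_all
  have k3: "(1-t) * D \<ge> D/2"
  proof -
    have "(1/2 - t) * D \<ge> 0" using t1 D by simp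
    then show ?thesis by (simp add: algebra_simps)
  qed
  have 4: "orr b w' p > 0" "orr w' a p > 0" using a4 a5 k2 k3 tK by simp_all
  show ?thesis using 1 2 3 4 by auto
qed


declare ch.simps[simp del] ort.simps[simp del] ins.simps[simp del]

primrec cell :: "nat \<Rightarrow> tri \<Rightarrow> tri set" where
  "cell 0 t = {t}"
| "cell (Suc k) t = (\<Union>i<6. cell k (ch i t))"

primrec sideA :: "nat \<Rightarrow> tri \<Rightarrow> tri set" where
  "sideA 0 t = {t}"
| "sideA (Suc k) t = sideA k (ch 0 t) \<union> sideA k (ch 1 t)"

definition F :: "nat \<Rightarrow> tri \<Rightarrow> complex set set" where "F k t = fc ` cell k t"
definition SA :: "nat \<Rightarrow> tri \<Rightarrow> complex set set" where "SA k t = fc ` sideA k t"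

lemma UN6: "(\<Union>i<(6::nat). f i) = f 0 \<union> f 1 \<union> f 2 \<union> f 3 \<union> f 4 \<union> f 5"
  by (auto simp: lessThan_def numeral_eq_Suc less_Suc_eq)

lemma ort_ch_pos: "ort t > 0 \<Longrightarrow> ort (ch i t) > 0"
  by (simp add: ort_ch)

lemma cell_pos: "ort t > 0 \<Longrightarrow> s \<in> cell k t \<Longrightarrow> ort s > 0"
proof (induction k arbitrary: t)
  case 0 then show ?case by simp
next
  case (Suc k)
  then obtain i where "s \<in> cell k (ch i t)" by (simp only: cell.simps UN_iff) blast
  then show ?case using Suc ort_ch_pos by blast
qed

lemma cell_ins: "s \<in> cell k t \<Longrightarrow> ins s p \<Longrightarrow> ins t p"
proof (induction k arbitrary: t)
  case 0 then show ?case by simp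
next
  case (Suc k)
  then obtain i where "s \<in> cell k (ch i t)" by (simp only: cell.simps UN_iff) blast
  then show ?case using Suc ins_ch by blast
qed

lemma cell_distinct:
  "ort t > 0 \<Longrightarrow> s \<in> cell k t \<Longrightarrow> s' \<in> cell k t \<Longrightarrow> ins s p \<Longrightarrow> ins s' p \<Longrightarrow> s = s'"
proof (induction k arbitrary: t)
  case 0 then show ?case by simp
next
  case (Suc k)
  from Suc.prems obtain i j where i: "i < 6" "s \<in> cell k (ch i t)" and j: "j < 6" "s' \<in> cell k (ch j t)"
    by (simp only: cell.simps UN_iff lessThan_iff) blast
  have "ins (ch i t) p" "ins (ch j t) p" using i j Suc.prems cell_ins by blast+
  then have "i = j" using ins_ch_disj i j by blast
  then show ?case using Suc.IH[of "ch i t"] Suc.prems i j ort_ch_pos by blast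
qed

lemma common_pt:
  assumes "ort u > 0" "ort u' > 0" "s \<in> cell k u" "s' \<in> cell k' u'" "fc s = fc s'"
  shows "\<exists>p. ins u p \<and> ins u' p \<and> ins s p \<and> ins s' p"
proof -
  have ps: "ort s > 0" "ort s' > 0" using assms cell_pos by blast+
  have "ins s (bc s)" using ins_bc ps by blast
  moreover have "ins s' = ins s" using fc_eq_ins ps assms(5) by blast
  ultimately show ?thesis using assms cell_ins by metis
qed

lemma F_disj_child:
  assumes "ort t > 0" "i < 6" "j < 6" "i \<noteq> j"
  shows "F k (ch i t) \<inter> F k (ch j t) = {}"
proof (rule ccontr)
  assume "F k (ch i t) \<inter> F k (ch j t) \<noteq> {}"
  then obtain s s' where "s \<in> cell k (ch i t)" "s' \<in> cell k (ch j t)" "fc s = fc s'"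
    unfolding F_def by force
  then obtain p where "ins (ch i t) p" "ins (ch j t) p"
    using common_pt[of "ch i t" "ch j t"] ort_ch_pos assms(1) by blast
  then show False using ins_ch_disj assms by blast
qed

lemma F_disj:
  assumes "ort t > 0" "u \<in> cell j t" "u' \<in> cell j t" "u \<noteq> u'"
  shows "F k u \<inter> F k u' = {}"
proof (rule ccontr)
  assume "F k u \<inter> F k u' \<noteq> {}"
  then obtain s s' where "s \<in> cell k u" "s' \<in> cell k u'" "fc s = fc s'"
    unfolding F_def by force
  then obtain p where "ins u p" "ins u' p"
    using common_pt[of u u'] cell_pos assms by blast
  then show False using cell_distinct assms by blast
qed

lemma fc_inj: "ort t > 0 \<Longrightarrow> inj_on fc (cell k t)"
  unfolding inj_on_def
proof (intro ballI impI)
  fix s s' assume "ort t > 0" "s \<in> cell k t" "s' \<in> cell k t" "fc s = fc s'"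
  then obtain p where "ins s p" "ins s' p" using common_pt[of t t s k s' k] by blast
  then show "s = s'" using cell_distinct \<open>ort t > 0\<close> \<open>s \<in> cell k t\<close> \<open>s' \<in> cell k t\<close> by blast
qed

lemma finite_cell[simp]: "finite (cell k t)"
  by (induction k arbitrary: t) auto

lemma finite_F[simp]: "finite (F k t)" by (simp add: F_def)

lemma card_cell: "card (cell k t) \<le> 6 ^ k"
proof (induction k arbitrary: t)
  case 0 then show ?case by simp
next
  case (Suc k)
  have "card (cell (Suc k) t) \<le> (\<Sum>i<6. card (cell k (ch i t)))"
    by (simp add: card_UN_le)
  also have "\<dots> \<le> (\<Sum>i<(6::nat). 6 ^ k)" by (intro sum_mono Suc.IH)
  finally show ?case by simp
qed

lemma card_F: "card (F k t) \<le> 6 ^ k"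
  unfolding F_def using card_image_le[of "cell k t" fc] card_cell[of k t] by simp

lemma sideA_cell: "sideA k t \<subseteq> cell k t"
proof (induction k arbitrary: t)
  case 0 then show ?case by simp
next
  case (Suc k)
  show ?case using Suc.IH[of "ch 0 t"] Suc.IH[of "ch 1 t"] by (auto simp: UN6)
qed

lemma SA_F: "SA k t \<subseteq> F k t" unfolding SA_def F_def using sideA_cell by blast

lemma finite_SA[simp]: "finite (SA k t)" using SA_F finite_F finite_subset by blast

lemma SA_Suc: "SA (Suc k) t = SA k (ch 0 t) \<union> SA k (ch 1 t)"
  by (simp add: SA_def image_Un)

lemma F_Suc: "F (Suc k) t = (\<Union>i<6. F k (ch i t))"
  by (simp add: F_def image_UN)

lemma card_SA: "ort t > 0 \<Longrightarrow> card (SA k t) = 2 ^ k"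
proof (induction k arbitrary: t)
  case 0 then show ?case by (simp add: SA_def)
next
  case (Suc k)
  have d: "SA k (ch 0 t) \<inter> SA k (ch 1 t) = {}"
    using F_disj_child[OF Suc.prems, of 0 1 k] SA_F[of k "ch 0 t"] SA_F[of k "ch 1 t"] by auto
  show ?case unfolding SA_Suc using card_Un_disjoint[OF finite_SA finite_SA d]
      Suc.IH[OF ort_ch_pos[OF Suc.prems]] by simp
qed

lemma ch_rot: "ch 0 (rot t) = ch 2 t" "ch 1 (rot t) = ch 3 t" "ch 2 (rot t) = ch 4 t"
  "ch 3 (rot t) = ch 5 t" "ch 4 (rot t) = ch 0 t" "ch 5 (rot t) = ch 1 t"
  by (cases t; simp add: ch.simps algebra_simps)+

lemma ch_rot': "ch (Suc 0) (rot t) = ch 3 t" "ch 5 (rot t) = ch (Suc 0) t"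
  using ch_rot by simp_all

lemma cell_rot: "cell (Suc k) (rot t) = cell (Suc k) t"
  by (simp add: UN6 ch_rot ch_rot' Un_ac)

lemma F_rot[simp]: "F k (rot t) = F k t"
  by (cases k) (simp_all add: F_def cell_rot del: cell.simps(2))

lemma SA_rot: "SA (Suc k) (rot t) = SA k (ch 2 t) \<union> SA k (ch 3 t)"
  "SA (Suc k) (rot (rot t)) = SA k (ch 4 t) \<union> SA k (ch 5 t)"
  by (simp_all add: SA_Suc ch_rot ch_rot')

lemma cell_add: "cell (a + b) t = (\<Union>s\<in>cell a t. cell b s)"
  by (induction a arbitrary: t) auto


definition B2 :: "complex set set \<Rightarrow> complex set set \<Rightarrow> complex set set \<Rightarrow> (complex set \<times> complex set) set" where
  "B2 X S S' = {(f,g). f \<in> S \<and> g \<in> S' \<and> f \<in> X \<and> g \<notin> X \<and> card (f \<inter> g) = 2}"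

definition nX :: "complex set set \<Rightarrow> complex set set \<Rightarrow> nat" where
  "nX X S = card (S \<inter> X)"

lemma finite_B2: "finite S \<Longrightarrow> finite S' \<Longrightarrow> finite (B2 X S S')"
  by (rule finite_subset[of _ "S \<times> S'"]) (auto simp: B2_def)

lemma B2_mono: "S1 \<subseteq> T1 \<Longrightarrow> S2 \<subseteq> T2 \<Longrightarrow> B2 X S1 S2 \<subseteq> B2 X T1 T2"
  by (auto simp: B2_def)

lemma card_B2_mono: "S1 \<subseteq> T1 \<Longrightarrow> S2 \<subseteq> T2 \<Longrightarrow> finite T1 \<Longrightarrow> finite T2 \<Longrightarrow>
   card (B2 X S1 S2) \<le> card (B2 X T1 T2)"
  by (intro card_mono finite_B2 B2_mono)

lemma nX_Un: "A \<inter> B = {} \<Longrightarrow> finite A \<Longrightarrow> finite B \<Longrightarrow> nX X (A \<union> B) = nX X A + nX X B"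
  unfolding nX_def by (subst card_Un_disjoint[symmetric]) (auto simp: Int_Un_distrib2)

lemma nX_mono: "A \<subseteq> B \<Longrightarrow> finite B \<Longrightarrow> nX X A \<le> nX X B"
  unfolding nX_def by (intro card_mono) auto

lemma pair_ineq:
  assumes "ort t > 0" "ort t' > 0" "fst t = fst (snd t')" "fst (snd t) = fst t'"
  shows "nX X (SA k t) \<le> nX X (SA k t') + card (B2 X (SA k t) (SA k t'))"
  using assms
proof (induction k arbitrary: t t')
  case 0
  obtain x y z where t: "t = (x,y,z)" by (cases t)
  obtain x' y' z' where t': "t' = (x',y',z')" by (cases t')
  have e: "x' = y" "y' = x" using 0 t t' by auto
  have c: "card (fc t \<inter> fc t') = 2" using 0(1,2) adj_card[of x y z z'] t t' e by (simp add: ort.simps)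
  show ?case
  proof (cases "fc t \<in> X \<and> fc t' \<notin> X")
    case True
    then have "B2 X (SA 0 t) (SA 0 t') = {(fc t, fc t')}" using c by (auto simp: B2_def SA_def)
    then show ?thesis using True by (simp add: nX_def SA_def card_le_Suc_iff)
  next
    case False
    have "card ({fc t} \<inter> X) \<le> 1" by (cases "fc t \<in> X") auto
    then show ?thesis using False by (auto simp: nX_def SA_def)
  qed
next
  case (Suc k)
  obtain x y z where t: "t = (x,y,z)" by (cases t)
  obtain x' y' z' where t': "t' = (x',y',z')" by (cases t')
  have e: "x' = y" "y' = x" using Suc.prems t t' by auto
  have m: "(y+x)/2 = (x+y)/2" by (simp add: add.commute)
  define A0 where "A0 = SA k (ch 0 t)"
  define A1 where "A1 = SA k (ch 1 t)"
  define B0 where "B0 = SA k (ch 0 t')"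
  define B1 where "B1 = SA k (ch 1 t')"
  have p: "ort (ch i t) > 0" "ort (ch i t') > 0" for i using Suc.prems ort_ch_pos by blast+
  have c0: "ch 0 t = (x, (x+y)/2, (x+y+z)/3)" "ch 1 t = ((x+y)/2, y, (x+y+z)/3)"
    using t by (simp_all add: ch.simps)
  have c1: "ch 0 t' = (y, (x+y)/2, (y+x+z')/3)" "ch 1 t' = ((x+y)/2, x, (y+x+z')/3)"
    using t' e m by (simp_all add: ch.simps)
  have c2: "ch (Suc 0) t = ((x+y)/2, y, (x+y+z)/3)" "ch (Suc 0) t' = ((x+y)/2, x, (y+x+z')/3)"
    using c0(2) c1(2) by simp_all
  have IH1: "nX X A0 \<le> nX X B1 + card (B2 X A0 B1)"
    unfolding A0_def B1_def by (rule Suc.IH[OF p(1)[of 0] p(2)[of 1]]) (simp_all add: c0 c1 c2)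
  have IH2: "nX X A1 \<le> nX X B0 + card (B2 X A1 B0)"
    unfolding A1_def B0_def by (rule Suc.IH[OF p(1)[of 1] p(2)[of 0]]) (simp_all add: c0 c1 c2)
  have dA: "A0 \<inter> A1 = {}" unfolding A0_def A1_def
    using F_disj_child[OF Suc.prems(1), of 0 1 k] SA_F[of k "ch 0 t"] SA_F[of k "ch 1 t"] by auto
  have dB: "B0 \<inter> B1 = {}" unfolding B0_def B1_def
    using F_disj_child[OF Suc.prems(2), of 0 1 k] SA_F[of k "ch 0 t'"] SA_F[of k "ch 1 t'"] by auto
  have fin: "finite A0" "finite A1" "finite B0" "finite B1" by (simp_all add: A0_def A1_def B0_def B1_def)
  have d2: "B2 X A0 B1 \<inter> B2 X A1 B0 = {}" using dA by (auto simp: B2_def)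
  have "card (B2 X A0 B1) + card (B2 X A1 B0) = card (B2 X A0 B1 \<union> B2 X A1 B0)"
    by (rule card_Un_disjoint[symmetric]) (use fin d2 finite_B2 in auto)
  also have "\<dots> \<le> card (B2 X (A0 \<union> A1) (B0 \<union> B1))"
    by (rule card_mono) (use fin finite_B2[of "A0 \<union> A1" "B0 \<union> B1" X] in \<open>auto simp: B2_def\<close>)
  finally have "card (B2 X A0 B1) + card (B2 X A1 B0) \<le> card (B2 X (A0 \<union> A1) (B0 \<union> B1))" .
  moreover have "nX X (A0 \<union> A1) = nX X A0 + nX X A1" "nX X (B0 \<union> B1) = nX X B0 + nX X B1"
    using nX_Un dA dB fin by blast+
  ultimately show ?case using IH1 IH2 unfolding SA_Suc A0_def[symmetric] A1_def[symmetric]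
      B0_def[symmetric] B1_def[symmetric] by simp
qed


lemma SA_disj: "ort t > 0 \<Longrightarrow> i < 6 \<Longrightarrow> j < 6 \<Longrightarrow> i \<noteq> j \<Longrightarrow> SA k (ch i t) \<inter> SA k (ch j t) = {}"
  using F_disj_child[of t i j k] SA_F[of k "ch i t"] SA_F[of k "ch j t"] by blast

lemma six_cases: "(i::nat) < 6 \<Longrightarrow> i = 0 \<or> i = 1 \<or> i = 2 \<or> i = 3 \<or> i = 4 \<or> i = 5"
  by arith

lemma cross:
  assumes "ort t > 0" "i < 6" "j = Suc i mod 6"
  shows "nX X (SA k (rot (ch i t))) \<le> nX X (SA k (rot (rot (ch j t)))) + card (B2 X (F k (ch i t)) (F k (ch j t)))
    \<and> nX X (SA k (rot (rot (ch j t)))) \<le> nX X (SA k (rot (ch i t))) + card (B2 X (F k (ch j t)) (F k (ch i t)))"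
proof -
  obtain x y z where t: "t = (x,y,z)" by (cases t)
  have h: "fst (rot (ch i t)) = fst (snd (rot (rot (ch j t))))"
      "fst (snd (rot (ch i t))) = fst (rot (rot (ch j t)))"
    using six_cases[OF assms(2)] assms(3) t by (auto simp: ch.simps)
  have p: "ort (rot (ch i t)) > 0" "ort (rot (rot (ch j t))) > 0" using assms(1) ort_ch_pos by simp_all
  have 1: "nX X (SA k (rot (ch i t))) \<le> nX X (SA k (rot (rot (ch j t)))) + card (B2 X (SA k (rot (ch i t))) (SA k (rot (rot (ch j t)))))"
    by (rule pair_ineq[OF p h])
  have 2: "nX X (SA k (rot (rot (ch j t)))) \<le> nX X (SA k (rot (ch i t))) + card (B2 X (SA k (rot (rot (ch j t)))) (SA k (rot (ch i t))))"
    by (rule pair_ineq[OF p(2) p(1) h(2)[symmetric] h(1)[symmetric]])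
  have 3: "card (B2 X (SA k (rot (ch i t))) (SA k (rot (rot (ch j t))))) \<le> card (B2 X (F k (ch i t)) (F k (ch j t)))"
    "card (B2 X (SA k (rot (rot (ch j t)))) (SA k (rot (ch i t)))) \<le> card (B2 X (F k (ch j t)) (F k (ch i t)))"
    using SA_F[of k "rot (ch i t)"] SA_F[of k "rot (rot (ch j t))"]
    by (auto intro!: card_B2_mono)
  show ?thesis using 1 2 3 by linarith
qed

lemma big:
  assumes "ort t > 0"
  shows "(\<Sum>ij\<in>{..<6}\<times>{..<6}. card (B2 X (F k (ch (fst ij) t)) (F k (ch (snd ij) t))))
         \<le> card (B2 X (F (Suc k) t) (F (Suc k) t))"
proof -
  let ?A = "\<lambda>ij. B2 X (F k (ch (fst ij) t)) (F k (ch (snd ij) t))"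
  have "card (\<Union>ij\<in>{..<6::nat}\<times>{..<6::nat}. ?A ij) = (\<Sum>ij\<in>{..<6}\<times>{..<6}. card (?A ij))"
  proof (rule card_UN_disjoint)
    show "finite ({..<6::nat}\<times>{..<6::nat})" by simp
    show "\<forall>ij\<in>{..<6}\<times>{..<6}. finite (?A ij)" by (simp add: finite_B2)
    show "\<forall>ij\<in>{..<6}\<times>{..<6}. \<forall>ij'\<in>{..<6}\<times>{..<6}. ij \<noteq> ij' \<longrightarrow> ?A ij \<inter> ?A ij' = {}"
    proof (intro ballI impI)
      fix ij ij' assume a: "ij \<in> {..<6::nat}\<times>{..<6::nat}" "ij' \<in> {..<6}\<times>{..<6}" "ij \<noteq> ij'"
      show "?A ij \<inter> ?A ij' = {}"
      proof (cases "fst ij = fst ij'")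
        case True
        then have "snd ij \<noteq> snd ij'" using a(3) by (simp add: prod_eq_iff)
        moreover have "snd ij < 6" "snd ij' < 6" using a by auto
        ultimately have "F k (ch (snd ij) t) \<inter> F k (ch (snd ij') t) = {}"
          using F_disj_child[OF assms] by blast
        then show ?thesis by (auto simp: B2_def)
      next
        case False
        moreover have "fst ij < 6" "fst ij' < 6" using a by auto
        ultimately have "F k (ch (fst ij) t) \<inter> F k (ch (fst ij') t) = {}"
          using F_disj_child[OF assms] by blast
        then show ?thesis by (auto simp: B2_def)
      qed
    qed
  qed
  moreover have "(\<Union>ij\<in>{..<6::nat}\<times>{..<6::nat}. ?A ij) \<subseteq> B2 X (F (Suc k) t) (F (Suc k) t)"
    by (auto simp: B2_def F_Suc)
  then have "card (\<Union>ij\<in>{..<6::nat}\<times>{..<6::nat}. ?A ij) \<le> card (B2 X (F (Suc k) t) (F (Suc k) t))"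
    by (intro card_mono finite_B2) simp_all
  ultimately show ?thesis by simp
qed

lemma big2:
  fixes X :: "complex set set" and k :: nat
  assumes "ort t > 0"
  defines "G \<equiv> \<lambda>i j. card (B2 X (F k (ch i t)) (F k (ch j t)))"
  shows "G 0 0 + G 1 1 + G 2 2 + G 3 3 + G 4 4 + G 5 5 + G 0 1 + G 1 0 + G 1 2 + G 2 1 + G 2 3 + G 3 2
     + G 3 4 + G 4 3 + G 4 5 + G 5 4 + G 5 0 + G 0 5 \<le> card (B2 X (F (Suc k) t) (F (Suc k) t))"
proof -
  let ?S = "{(0,0),(1,1),(2,2),(3,3),(4,4),(5,5),(0,1),(1,0),(1,2),(2,1),(2,3),(3,2),(3,4),(4,3),(4,5),(5,4),(5,0),(0,5)} :: (nat\<times>nat) set"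
  have "(\<Sum>ij\<in>?S. G (fst ij) (snd ij)) \<le> (\<Sum>ij\<in>{..<6}\<times>{..<6}. G (fst ij) (snd ij))"
    by (rule sum_mono2) auto
  also have "\<dots> \<le> card (B2 X (F (Suc k) t) (F (Suc k) t))" using big[OF assms(1)] by (simp add: G_def)
  finally show ?thesis by simp
qed


lemma six_lt: "(0::nat) < 6" "(1::nat) < 6" "(2::nat) < 6" "(3::nat) < 6" "(4::nat) < 6" "(5::nat) < 6"
  by simp_all
lemma six_suc: "(1::nat) = Suc 0 mod 6" "(2::nat) = Suc 1 mod 6" "(3::nat) = Suc 2 mod 6"
  "(4::nat) = Suc 3 mod 6" "(5::nat) = Suc 4 mod 6" "(0::nat) = Suc 5 mod 6"
  by simp_all

lemma cut:
  "ort t > 0 \<Longrightarrow> nX X (SA k t) \<le> nX X (SA k (rot t)) + card (B2 X (F k t) (F k t)) \<and>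
     nX X (SA k t) \<le> nX X (SA k (rot (rot t))) + card (B2 X (F k t) (F k t))"
proof (induction k arbitrary: t)
  case 0 then show ?case by (simp add: SA_def)
next
  case (Suc k)
  have D: "nX X (SA k c) \<le> nX X (SA k (rot c)) + card (B2 X (F k c) (F k c))"
     "nX X (SA k c) \<le> nX X (SA k (rot (rot c))) + card (B2 X (F k c) (F k c))"
     "nX X (SA k (rot c)) \<le> nX X (SA k (rot (rot c))) + card (B2 X (F k c) (F k c))"
     "nX X (SA k (rot c)) \<le> nX X (SA k c) + card (B2 X (F k c) (F k c))"
     "nX X (SA k (rot (rot c))) \<le> nX X (SA k c) + card (B2 X (F k c) (F k c))"
     "nX X (SA k (rot (rot c))) \<le> nX X (SA k (rot c)) + card (B2 X (F k c) (F k c))"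
    if "ort c > 0" for c
    using Suc.IH[of c] Suc.IH[of "rot c"] Suc.IH[of "rot (rot c)"] that by simp_all
  have p: "ort (ch i t) > 0" for i using Suc.prems ort_ch_pos by blast
  note D0 = D[OF p[of 0]] and D1 = D[OF p[of 1]] and D2 = D[OF p[of 2]]
    and D3 = D[OF p[of 3]] and D4 = D[OF p[of 4]] and D5 = D[OF p[of 5]]
  note C0 = cross[OF Suc.prems six_lt(1) six_suc(1), of X k]
    and C1 = cross[OF Suc.prems six_lt(2) six_suc(2), of X k]
    and C2 = cross[OF Suc.prems six_lt(3) six_suc(3), of X k]
    and C3 = cross[OF Suc.prems six_lt(4) six_suc(4), of X k]
    and C4 = cross[OF Suc.prems six_lt(5) six_suc(5), of X k]
    and C5 = cross[OF Suc.prems six_lt(6) six_suc(6), of X k]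
  note B = big2[OF Suc.prems, of X k]
  have n0: "nX X (SA (Suc k) t) = nX X (SA k (ch 0 t)) + nX X (SA k (ch 1 t))"
    unfolding SA_Suc by (rule nX_Un) (use SA_disj[OF Suc.prems] in auto)
  have n1: "nX X (SA (Suc k) (rot t)) = nX X (SA k (ch 2 t)) + nX X (SA k (ch 3 t))"
    unfolding SA_rot by (rule nX_Un) (use SA_disj[OF Suc.prems] in auto)
  have n2: "nX X (SA (Suc k) (rot (rot t))) = nX X (SA k (ch 4 t)) + nX X (SA k (ch 5 t))"
    unfolding SA_rot(2) by (rule nX_Un) (use SA_disj[OF Suc.prems] in auto)
  show ?case
  proof
    show "nX X (SA (Suc k) t) \<le> nX X (SA (Suc k) (rot t)) + card (B2 X (F (Suc k) t) (F (Suc k) t))"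
      using D1(1) conjunct1[OF C1] D2(5) D0(2) conjunct2[OF C5] D5(3) conjunct2[OF C4] D4(3)
        conjunct2[OF C3] D3(4) n0 n1 B by linarith
    show "nX X (SA (Suc k) t) \<le> nX X (SA (Suc k) (rot (rot t))) + card (B2 X (F (Suc k) t) (F (Suc k) t))"
      using D0(2) conjunct2[OF C5] D5(4) D1(1) conjunct1[OF C1] D2(6) conjunct1[OF C2] D3(6)
        conjunct1[OF C3] D4(5) n0 n2 B by linarith
  qed
qed


lemma cutD:
  assumes "ort c > 0"
  shows "nX X (SA k c) \<le> nX X (SA k (rot c)) + card (B2 X (F k c) (F k c))"
     "nX X (SA k c) \<le> nX X (SA k (rot (rot c))) + card (B2 X (F k c) (F k c))"
     "nX X (SA k (rot c)) \<le> nX X (SA k (rot (rot c))) + card (B2 X (F k c) (F k c))"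
     "nX X (SA k (rot c)) \<le> nX X (SA k c) + card (B2 X (F k c) (F k c))"
     "nX X (SA k (rot (rot c))) \<le> nX X (SA k c) + card (B2 X (F k c) (F k c))"
     "nX X (SA k (rot (rot c))) \<le> nX X (SA k (rot c)) + card (B2 X (F k c) (F k c))"
  using cut[of c X k] cut[of "rot c" X k] cut[of "rot (rot c)" X k] assms by simp_all

lemma cell_rot_ex: "u \<in> cell d c \<Longrightarrow> \<exists>u'\<in>cell d (rot c). F L u' = F L u"
  by (cases d) (auto simp del: cell.simps(2) simp: cell_rot)

lemma nX_full: "S \<subseteq> X \<Longrightarrow> nX X S = card S"
  unfolding nX_def by (simp add: Int_absorb2)

lemma nX_empty: "S \<inter> X = {} \<Longrightarrow> nX X S = 0"
  unfolding nX_def by simp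

lemma Efull:
  "ort Q > 0 \<Longrightarrow> u \<in> cell d Q \<Longrightarrow> F L u \<subseteq> X \<Longrightarrow>
   2 ^ L \<le> nX X (SA (d + L) Q) + card (B2 X (F (d + L) Q) (F (d + L) Q))"
proof (induction d arbitrary: Q u)
  case 0
  then have "u = Q" by simp
  then have "nX X (SA L Q) = 2 ^ L" using 0 SA_F[of L Q] nX_full[of "SA L Q" X] card_SA[of Q L] by auto
  then show ?case by simp
next
  case (Suc d)
  let ?K = "d + L"
  from Suc.prems(2) obtain i where i: "i < 6" "u \<in> cell d (ch i Q)"
    by (simp only: cell.simps UN_iff lessThan_iff) blast
  have p: "ort (ch j Q) > 0" for j using Suc.prems ort_ch_pos by blast
  have E0: "2 ^ L \<le> nX X (SA ?K (ch i Q)) + card (B2 X (F ?K (ch i Q)) (F ?K (ch i Q)))"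
    using Suc.IH[OF p i(2) Suc.prems(3)] .
  obtain u1 where u1: "u1 \<in> cell d (rot (ch i Q))" "F L u1 = F L u" using cell_rot_ex[OF i(2)] by blast
  obtain u2 where u2: "u2 \<in> cell d (rot (rot (ch i Q)))" "F L u2 = F L u1" using cell_rot_ex[OF u1(1)] by blast
  have E1: "2 ^ L \<le> nX X (SA ?K (rot (ch i Q))) + card (B2 X (F ?K (ch i Q)) (F ?K (ch i Q)))"
    using Suc.IH[of "rot (ch i Q)" u1] u1 p Suc.prems(3) by simp
  have E2: "2 ^ L \<le> nX X (SA ?K (rot (rot (ch i Q)))) + card (B2 X (F ?K (ch i Q)) (F ?K (ch i Q)))"
    using Suc.IH[of "rot (rot (ch i Q))" u2] u1 u2 p Suc.prems(3) by simp
  note D0 = cutD[OF p[of 0], of X ?K] and D1 = cutD[OF p[of 1], of X ?K] and D2 = cutD[OF p[of 2], of X ?K]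
    and D3 = cutD[OF p[of 3], of X ?K] and D4 = cutD[OF p[of 4], of X ?K] and D5 = cutD[OF p[of 5], of X ?K]
  note C0 = cross[OF Suc.prems(1) six_lt(1) six_suc(1), of X ?K]
    and C1 = cross[OF Suc.prems(1) six_lt(2) six_suc(2), of X ?K]
    and C2 = cross[OF Suc.prems(1) six_lt(3) six_suc(3), of X ?K]
    and C3 = cross[OF Suc.prems(1) six_lt(4) six_suc(4), of X ?K]
    and C4 = cross[OF Suc.prems(1) six_lt(5) six_suc(5), of X ?K]
    and C5 = cross[OF Suc.prems(1) six_lt(6) six_suc(6), of X ?K]
  note B = big2[OF Suc.prems(1), of X ?K]
  have n0: "nX X (SA (Suc ?K) Q) = nX X (SA ?K (ch 0 Q)) + nX X (SA ?K (ch 1 Q))"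
    unfolding SA_Suc by (rule nX_Un) (use SA_disj[OF Suc.prems(1)] in auto)
  have "2 ^ L \<le> nX X (SA (Suc ?K) Q) + card (B2 X (F (Suc ?K) Q) (F (Suc ?K) Q))"
    using six_cases[OF i(1)]
  proof (elim disjE)
    assume h: "i = 0" then show ?thesis using E0[unfolded h] n0 B by linarith
  next
    assume h: "i = 1" then show ?thesis using E0[unfolded h] n0 B by linarith
  next
    assume h: "i = 2" then show ?thesis using E2[unfolded h] conjunct2[OF C1] D1(4) n0 B by linarith
  next
    assume h: "i = 3" then show ?thesis using E2[unfolded h] conjunct2[OF C2] D2(3) conjunct2[OF C1] D1(4) n0 B
      by linarith
  next
    assume h: "i = 4" then show ?thesis using E1[unfolded h] conjunct1[OF C4] D5(6) conjunct1[OF C5] D0(5) n0 B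
      by linarith
  next
    assume h: "i = 5" then show ?thesis using E1[unfolded h] conjunct1[OF C5] D0(5) n0 B by linarith
  qed
  then show ?case by simp
qed

lemma conn:
  "ort t > 0 \<Longrightarrow> F k t \<inter> X \<noteq> {} \<Longrightarrow> \<not> F k t \<subseteq> X \<Longrightarrow> B2 X (F k t) (F k t) \<noteq> {}"
proof (induction k arbitrary: t)
  case 0 then show ?case by (auto simp: F_def)
next
  case (Suc k)
  have sub: "F k (ch i t) \<subseteq> F (Suc k) t" if "i < 6" for i using that unfolding F_Suc by blast
  have p: "ort (ch j t) > 0" for j using Suc.prems ort_ch_pos by blast
  show ?case
  proof (cases "\<exists>i<6. F k (ch i t) \<inter> X \<noteq> {} \<and> \<not> F k (ch i t) \<subseteq> X")
    case True
    then obtain i where i: "i < 6" "F k (ch i t) \<inter> X \<noteq> {}" "\<not> F k (ch i t) \<subseteq> X" by blast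
    have "B2 X (F k (ch i t)) (F k (ch i t)) \<noteq> {}" using Suc.IH[OF p i(2,3)] .
    moreover have "B2 X (F k (ch i t)) (F k (ch i t)) \<subseteq> B2 X (F (Suc k) t) (F (Suc k) t)"
      using B2_mono[OF sub[OF i(1)] sub[OF i(1)]] .
    ultimately show ?thesis by blast
  next
    case False
    define P where "P i = (F k (ch i t) \<subseteq> X)" for i
    have emp: "\<not> P i \<Longrightarrow> i < 6 \<Longrightarrow> F k (ch i t) \<inter> X = {}" for i using False P_def by blast
    obtain i0 where i0: "i0 < 6" "P i0" using Suc.prems(2) False unfolding P_def F_Suc by blast
    obtain j0 where j0: "j0 < 6" "\<not> P j0" using Suc.prems(3) unfolding P_def F_Suc by blast
    have "\<exists>i<6. P i \<noteq> P (Suc i mod 6)"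
    proof (rule ccontr)
      assume "\<not> ?thesis"
      then have "P 0 = P 1" "P 1 = P 2" "P 2 = P 3" "P 3 = P 4" "P 4 = P 5"
        by (metis less_numeral_extra(1,2) six_lt six_suc)+
      then show False using i0 j0 six_cases by metis
    qed
    then obtain i where i: "i < 6" "P i \<noteq> P (Suc i mod 6)" by blast
    define j where "j = Suc i mod 6"
    have j: "j < 6" unfolding j_def by simp
    note C = cross[OF Suc.prems(1) i(1) j_def, of X k]
    have s1: "card (SA k (rot (ch i t))) \<ge> 1" "card (SA k (rot (rot (ch j t)))) \<ge> 1"
      using card_SA[of "rot (ch i t)" k] card_SA[of "rot (rot (ch j t))" k] p by simp_all
    have SAi: "SA k (rot (ch i t)) \<subseteq> F k (ch i t)" "SA k (rot (rot (ch j t))) \<subseteq> F k (ch j t)"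
      using SA_F[of k "rot (ch i t)"] SA_F[of k "rot (rot (ch j t))"] by simp_all
    have "card (B2 X (F k (ch i t)) (F k (ch j t))) \<ge> 1 \<or> card (B2 X (F k (ch j t)) (F k (ch i t))) \<ge> 1"
    proof (cases "P i")
      case True
      then have "\<not> P j" using i(2) j_def by simp
      then have "nX X (SA k (rot (rot (ch j t)))) = 0" using emp j SAi by (intro nX_empty) blast
      moreover have "nX X (SA k (rot (ch i t))) \<ge> 1" using True SAi s1 nX_full P_def
        by (metis order_trans)
      ultimately show ?thesis using conjunct1[OF C] by linarith
    next
      case False
      then have "P j" using i(2) j_def by simp
      then have "nX X (SA k (rot (rot (ch j t)))) \<ge> 1" using SAi s1 nX_full P_def
        by (metis order_trans)
      moreover have "nX X (SA k (rot (ch i t))) = 0" using emp i False SAi by (intro nX_empty) blast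
      ultimately show ?thesis using conjunct2[OF C] by linarith
    qed
    then have "B2 X (F k (ch i t)) (F k (ch j t)) \<noteq> {} \<or> B2 X (F k (ch j t)) (F k (ch i t)) \<noteq> {}"
      by auto
    moreover have "B2 X (F k (ch i t)) (F k (ch j t)) \<subseteq> B2 X (F (Suc k) t) (F (Suc k) t)"
        "B2 X (F k (ch j t)) (F k (ch i t)) \<subseteq> B2 X (F (Suc k) t) (F (Suc k) t)"
      using sub[OF i(1)] sub[OF j] by (simp_all add: B2_mono)
    ultimately show ?thesis by blast
  qed
qed


definition T0 :: tri where "T0 = (hv0, hv1, hv2)"

lemma ort_T0: "ort T0 > 0"
  by (simp add: T0_def hv0_def hv1_def hv2_def orr_def ort.simps)

lemma lessThan6: "{..<6::nat} = {0,1,2,3,4,5}"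
  by (auto simp: lessThan_def numeral_eq_Suc less_Suc_eq)

lemma subdiv_ch: "subdiv t = (\<lambda>i. ch i t) ` {..<6}"
  by (cases t) (simp add: subdiv_def Let_def ch.simps lessThan6 insert_commute)

lemma cell_Suc': "cell (Suc n) t = (\<Union>s\<in>cell n t. subdiv s)"
proof -
  have "cell (n + 1) t = (\<Union>s\<in>cell n t. cell 1 s)" by (rule cell_add)
  moreover have "cell 1 s = subdiv s" for s by (auto simp: subdiv_ch)
  ultimately show ?thesis by simp
qed

lemma Ttri_cell: "Ttri n = cell n T0"
  by (induction n) (simp_all add: T0_def cell_Suc' del: cell.simps(2))

lemma faces_F: "faces n = F n T0"
proof -
  have "(\<lambda>(x, y, z). {x, y, z}) = fc" by (auto simp: fun_eq_iff)
  then show ?thesis by (simp add: faces_def F_def Ttri_cell)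
qed

lemma Lmap_eq: "Lmap z = Complex (Re z / 2 + Im z / (2 * sqrt 3)) (Im z / 3)"
proof -
  have s: "sqrt 3 * sqrt 3 = (3::real)" by simp
  show ?thesis
    unfolding Lmap_def hv0_def hv1_def hv2_def
    by (simp add: complex_eq_iff field_simps s)
qed

lemma sq3: "sqrt 3 * (sqrt 3 * x) = 3 * (x::real)"
  by (simp add: mult.assoc[symmetric])

lemma Lmap_add: "Lmap (a + b) = Lmap a + Lmap b"
  by (simp add: Lmap_eq complex_eq_iff field_simps sq3)

lemma Lmap_div: "Lmap (a / numeral n) = Lmap a / numeral n"
  by (simp add: Lmap_eq complex_eq_iff field_simps sq3)

lemma Lmap_inj: "inj Lmap"
proof (rule injI)
  fix a b assume h: "Lmap a = Lmap b"
  have e0: "Im a / 3 = Im b / 3" using h by (metis Lmap_eq complex.sel(2))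
  have e: "Im a = Im b" "Re a / 2 + Im a / (2 * sqrt 3) = Re b / 2 + Im b / (2 * sqrt 3)"
    using e0 apply simp using h by (metis Lmap_eq complex.sel(1))
  from e(1) have "Im a / (2 * sqrt 3) = Im b / (2 * sqrt 3)" by simp
  with e(2) have "Re a = Re b" by linarith
  with \<open>Im a = Im b\<close> show "a = b" by (simp add: complex_eq_iff)
qed

lemma Lmap_surj: "surj Lmap"
proof (rule surjI)
  fix w
  show "Lmap (Complex (2 * Re w - 3 * Im w / sqrt 3) (3 * Im w)) = w"
    by (simp add: Lmap_eq complex_eq_iff field_simps)
qed

lemma Lmap_bij: "bij Lmap" using Lmap_inj Lmap_surj by (rule bijI)

fun mapT :: "(complex \<Rightarrow> complex) \<Rightarrow> tri \<Rightarrow> tri" where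
  "mapT f (x,y,z) = (f x, f y, f z)"

lemma mapT_ch: "mapT Lmap (ch i t) = ch i (mapT Lmap t)"
  by (cases t) (simp add: ch.simps Lmap_add Lmap_div)

lemma cell_map: "cell k (mapT Lmap t) = mapT Lmap ` cell k t"
  by (induction k arbitrary: t) (simp_all add: mapT_ch[symmetric] image_UN)

lemma fc_map: "fc (mapT f t) = f ` fc t"
  by (cases t) auto

lemma F_map: "F k (mapT Lmap t) = image Lmap ` F k t"
  by (simp add: F_def cell_map image_image fc_map)

lemma map_T0: "mapT Lmap T0 = ch 0 T0"
proof -
  have "Lmap hv0 = hv0" "Lmap hv1 = (hv0 + hv1) / 2" "Lmap hv2 = (hv0 + hv1 + hv2) / 3"
    unfolding Lmap_def by (simp_all add: hv0_def hv1_def hv2_def complex_eq_iff)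
  then show ?thesis by (simp add: T0_def ch.simps)
qed

lemma F_sub_child: "i < 6 \<Longrightarrow> F k (ch i t) \<subseteq> F (Suc k) t"
  unfolding F_Suc by blast

lemma lift1: "(Lmap ^^ n) ` f \<in> F n T0 \<Longrightarrow> (Lmap ^^ Suc n) ` f \<in> F (Suc n) T0"
proof -
  assume a: "(Lmap ^^ n) ` f \<in> F n T0"
  have "(Lmap ^^ Suc n) ` f = Lmap ` ((Lmap ^^ n) ` f)" by (simp add: image_comp)
  also have "\<dots> \<in> F n (mapT Lmap T0)" using a by (simp add: F_map)
  also have "F n (mapT Lmap T0) \<subseteq> F (Suc n) T0" using F_sub_child[of 0 n T0] by (simp add: map_T0)
  finally show ?thesis .
qed

lemma lift:
  assumes a: "(Lmap ^^ n) ` f \<in> F n T0" and nm: "n \<le> m"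
  shows "(Lmap ^^ m) ` f \<in> F m T0"
  using nm
proof (induction rule: dec_induct)
  case base show ?case using a .
next
  case (step k) show ?case using lift1[OF step.IH] .
qed

lemma lift2: "(Lmap ^^ n) ` f \<in> F n T0 \<Longrightarrow> (Lmap ^^ (n+2)) ` f \<in> F n (ch 0 (ch 0 T0))"
proof -
  assume a: "(Lmap ^^ n) ` f \<in> F n T0"
  have "(Lmap ^^ (n+2)) ` f = Lmap ` (Lmap ` ((Lmap ^^ n) ` f))" by (simp add: image_comp)
  also have "\<dots> \<in> F n (mapT Lmap (mapT Lmap T0))" using a by (simp add: F_map)
  also have "mapT Lmap (mapT Lmap T0) = ch 0 (ch 0 T0)" by (simp add: map_T0 mapT_ch)
  finally show ?thesis .
qed


lemma cell_ne: "cell k t \<noteq> {}"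
proof (induction k arbitrary: t)
  case 0 then show ?case by simp
next
  case (Suc k)
  have "cell k (ch 0 t) \<subseteq> cell (Suc k) t" unfolding cell.simps by (rule UN_upper) simp
  then show ?case using Suc.IH[of "ch 0 t"] by blast
qed

lemma F_ne: "F k t \<noteq> {}" by (simp add: F_def cell_ne)

lemma F_add: "F (a + b) t = (\<Union>u\<in>cell a t. F b u)"
  by (simp add: F_def cell_add image_UN)

lemma F_sub_cell: "u \<in> cell d t \<Longrightarrow> F L u \<subseteq> F (d + L) t"
  by (auto simp: F_add)

lemma B2_fst: "x \<in> B2 X S S' \<Longrightarrow> fst x \<in> S"
  by (cases x) (simp add: B2_def)

lemma cell1: "cell 1 t = (\<lambda>i. ch i t) ` {..<6}"
  by auto

lemma comb:
  assumes X: "X \<subseteq> F n (ch 0 (ch 0 T0))" "X \<noteq> {}"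
  shows "\<exists>L. 2 ^ L \<le> card (B2 X (F (n+2) T0) (F (n+2) T0)) \<and>
             card X \<le> card (B2 X (F (n+2) T0) (F (n+2) T0)) * 6 ^ Suc L"
proof -
  define M where "M = n + 2"
  define b where "b = card (B2 X (F M T0) (F M T0))"
  define full where "full m \<longleftrightarrow> (\<exists>u\<in>cell (M - m) T0. F m u \<subseteq> X)" for m
  define c where "c = ch 0 T0"
  have pT: "ort T0 > 0" by (rule ort_T0)
  have pc: "ort c > 0" unfolding c_def using pT ort_ch_pos by blast
  have XF: "X \<subseteq> F (Suc n) c" using X(1) F_sub_child[of 0 n c] unfolding c_def by auto
  have cM: "F (Suc n) c \<subseteq> F M T0" using F_sub_child[of 0 "Suc n" T0] unfolding c_def M_def by simp
  have XM: "X \<subseteq> F M T0" using XF cM by blast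
  have finB: "finite (B2 X (F M T0) (F M T0))" by (simp add: finite_B2)
  have full0: "full 0"
  proof -
    obtain f where "f \<in> X" using X(2) by blast
    then obtain s where s: "s \<in> cell M T0" "f = fc s" using XM unfolding F_def by blast
    then have "F 0 s \<subseteq> X" using \<open>f \<in> X\<close> by (simp add: F_def)
    then show ?thesis unfolding full_def using s by auto
  qed
  have nfull: "\<not> full (Suc n)"
  proof
    assume "full (Suc n)"
    then obtain u where u: "u \<in> cell (M - Suc n) T0" "F (Suc n) u \<subseteq> X" unfolding full_def by blast
    have "M - Suc n = Suc 0" unfolding M_def by simp
    then obtain i where i: "i < 6" "u = ch i T0" using u(1)
      by (simp only: cell.simps UN_iff lessThan_iff singleton_iff) blast
    show False
    proof (cases "i = 0")
      case True
      then have "F n (ch 1 c) \<subseteq> X" using u i F_sub_child[of 1 n c] unfolding c_def by auto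
      then have "F n (ch 1 c) \<subseteq> F n (ch 0 c)" using X(1) unfolding c_def by auto
      moreover have "F n (ch 1 c) \<inter> F n (ch 0 c) = {}" using F_disj_child[OF pc, of 1 0 n] by simp
      ultimately show False using F_ne by blast
    next
      case False
      have "F (Suc n) (ch i T0) \<subseteq> F (Suc n) c" using u i XF by auto
      moreover have "F (Suc n) (ch i T0) \<inter> F (Suc n) c = {}"
        using F_disj_child[OF pT i(1), of 0] False unfolding c_def by simp
      ultimately show False using F_ne by blast
    qed
  qed
  define m0 where "m0 = (LEAST m. \<not> full m)"
  have m0: "\<not> full m0" unfolding m0_def using nfull by (rule LeastI)
  have m0le: "m0 \<le> Suc n" unfolding m0_def using nfull by (rule Least_le)
  have "m0 \<noteq> 0"
  proof
    assume "m0 = 0" with m0 full0 show False by simp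
  qed
  then obtain L where L: "m0 = Suc L" using not0_implies_Suc by blast
  have fullL: "full L" using not_less_Least[of L "\<lambda>m. \<not> full m"] L unfolding m0_def by auto
  then obtain uC where uC: "uC \<in> cell (M - L) T0" "F L uC \<subseteq> X" unfolding full_def by blast
  define d where "d = Suc n - L"
  have dL: "d + L = Suc n" "M - L = Suc d" using m0le L unfolding d_def M_def by auto
  obtain i where i: "i < 6" "uC \<in> cell d (ch i T0)" using uC(1) unfolding dL(2)
    by (simp only: cell.simps UN_iff lessThan_iff) blast
  have "F L uC \<subseteq> F (Suc n) (ch i T0)" using F_sub_cell[OF i(2), of L] dL(1) by simp
  have i0: "i = 0"
  proof (rule ccontr)
    assume "i \<noteq> 0"
    then have "F (Suc n) (ch i T0) \<inter> F (Suc n) c = {}"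
      using F_disj_child[OF pT i(1), of 0] unfolding c_def by simp
    moreover have "F L uC \<subseteq> F (Suc n) (ch i T0)" using F_sub_cell[OF i(2), of L] dL(1) by simp
    ultimately show False using uC(2) XF F_ne[of L uC] by blast
  qed
  obtain u' where u': "u' \<in> cell d (rot c)" "F L u' = F L uC"
    using cell_rot_ex[of uC d c L] i(2) i0 unfolding c_def by blast
  have E: "2 ^ L \<le> nX X (SA (d + L) (rot c)) + card (B2 X (F (d + L) (rot c)) (F (d + L) (rot c)))"
    using Efull[of "rot c" u' d L X] pc u' uC(2) by simp
  have "SA (Suc n) (rot c) \<inter> X = {}"
  proof -
    have "SA (Suc n) (rot c) \<subseteq> F n (ch 2 c) \<union> F n (ch 3 c)" unfolding SA_rot using SA_F by blast
    moreover have "F n (ch 2 c) \<inter> F n (ch 0 c) = {}" "F n (ch 3 c) \<inter> F n (ch 0 c) = {}"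
      using F_disj_child[OF pc, of 2 0 n] F_disj_child[OF pc, of 3 0 n] by simp_all
    ultimately show ?thesis using X(1) unfolding c_def by blast
  qed
  then have "nX X (SA (Suc n) (rot c)) = 0" by (rule nX_empty)
  moreover have "card (B2 X (F (Suc n) c) (F (Suc n) c)) \<le> b"
    unfolding b_def using cM by (intro card_B2_mono) simp_all
  ultimately have bL: "2 ^ L \<le> b" using E dL(1) by simp
  define P where "P = {u \<in> cell (M - m0) T0. F m0 u \<inter> X \<noteq> {}}"
  have finP: "finite P" unfolding P_def by simp
  have "F M T0 = (\<Union>u\<in>cell (M - m0) T0. F m0 u)"
    using F_add[of "M - m0" m0 T0] m0le unfolding M_def by simp
  then have XP: "X \<subseteq> (\<Union>u\<in>P. F m0 u)" using XM unfolding P_def by blast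
  have "card X \<le> card (\<Union>u\<in>P. F m0 u)" using XP finP by (intro card_mono) auto
  also have "\<dots> \<le> (\<Sum>u\<in>P. card (F m0 u))" by (rule card_UN_le[OF finP])
  also have "\<dots> \<le> (\<Sum>u\<in>P. 6 ^ m0)" by (intro sum_mono card_F)
  also have "\<dots> = card P * 6 ^ m0" by simp
  finally have cX: "card X \<le> card P * 6 ^ m0" .
  have ne: "B2 X (F m0 u) (F m0 u) \<noteq> {}" if "u \<in> P" for u
  proof -
    have "u \<in> cell (M - m0) T0" "F m0 u \<inter> X \<noteq> {}" using that unfolding P_def by auto
    moreover have "\<not> F m0 u \<subseteq> X" using m0 calculation(1) unfolding full_def by blast
    ultimately show ?thesis using conn[of u m0 X] cell_pos[OF pT] by blast
  qed
  define e where "e u = (SOME x. x \<in> B2 X (F m0 u) (F m0 u))" for u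
  have eB: "e u \<in> B2 X (F m0 u) (F m0 u)" if "u \<in> P" for u
    unfolding e_def using ne[OF that] by (simp add: some_in_eq)
  have inj: "inj_on e P"
  proof (rule inj_onI)
    fix u v assume uv: "u \<in> P" "v \<in> P" "e u = e v"
    have "fst (e u) \<in> F m0 u" "fst (e v) \<in> F m0 v" using B2_fst[OF eB[OF uv(1)]] B2_fst[OF eB[OF uv(2)]] by auto
    then have "F m0 u \<inter> F m0 v \<noteq> {}" using uv(3) by auto
    then show "u = v" using F_disj[OF pT, of u "M - m0" v m0] uv(1,2) unfolding P_def by blast
  qed
  have sub: "e ` P \<subseteq> B2 X (F M T0) (F M T0)"
  proof
    fix x assume "x \<in> e ` P"
    then obtain u where u: "u \<in> P" "x = e u" by blast
    have "F m0 u \<subseteq> F M T0" using u(1) F_add[of "M - m0" m0 T0] m0le unfolding P_def M_def by auto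
    then show "x \<in> B2 X (F M T0) (F M T0)" using eB[OF u(1)] u(2) B2_mono by blast
  qed
  have "card P \<le> b" unfolding b_def using card_inj_on_le[OF inj sub finB] .
  then have "card X \<le> b * 6 ^ Suc L" using cX L by (metis mult_le_mono1 order_trans)
  then show ?thesis using bL unfolding b_def M_def by blast
qed


lemma final_real:
  fixes L b N :: nat
  assumes bL: "2 ^ L \<le> b" and Nb: "N \<le> b * 6 ^ Suc L" and N1: "N \<ge> 1"
  defines "\<epsilon> \<equiv> 1 / (1 + log 2 6)"
  shows "6 powr (- \<epsilon>) * real N powr \<epsilon> \<le> real b"
proof -
  define a where "a = log 2 (6::real)"
  have a0: "a > 0" unfolding a_def by simp
  have "(1::nat) \<le> 2 ^ L" by simp
  then have "b \<ge> 1" using bL by linarith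
  then have b1: "real b \<ge> 1" by simp
  have e6: "(6::real) ^ L = (2 ^ L) powr a"
  proof -
    have "(2::real) powr a = 6" unfolding a_def by simp
    then have "(6::real) powr real L = ((2::real) powr real L) powr a"
      by (metis powr_powr mult.commute)
    then show ?thesis by (simp add: powr_realpow)
  qed
  have "((2::real) ^ L) powr a \<le> real b powr a"
  proof -
    have "real (2 ^ L) \<le> real b" using bL by (simp only: of_nat_le_iff)
    then have bLr: "(2::real) ^ L \<le> real b" by simp
    show ?thesis using bLr a0 by (intro powr_mono2) auto
  qed
  then have "(6::real) ^ L \<le> real b powr a" using e6 by simp
  then have "real b * 6 * 6 ^ L \<le> real b * 6 * real b powr a"
    by (rule mult_left_mono) auto
  moreover have "real N \<le> real (b * 6 ^ Suc L)" using Nb by (simp only: of_nat_le_iff)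
  moreover have "real (b * 6 ^ Suc L) = real b * 6 * 6 ^ L" by simp
  ultimately have "real N \<le> real b * 6 * real b powr a" by linarith
  also have "\<dots> = 6 * real b powr (1 + a)" using b1 by (simp add: powr_add)
  finally have Nb6: "real N / 6 \<le> real b powr (1 + a)" by simp
  have e: "\<epsilon> = 1 / (1 + a)" unfolding \<epsilon>_def a_def by simp
  have ep: "\<epsilon> > 0" using e a0 by simp
  have "(real N / 6) powr \<epsilon> \<le> (real b powr (1 + a)) powr \<epsilon>"
    using Nb6 ep by (intro powr_mono2) simp_all
  also have "\<dots> = real b powr ((1 + a) * \<epsilon>)" by (rule powr_powr)
  also have "(1 + a) * \<epsilon> = 1" using e a0 by simp
  also have "real b powr 1 = real b" using b1 by simp
  finally have 1: "(real N / 6) powr \<epsilon> \<le> real b" .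
  have "(real N / 6) powr \<epsilon> = real N powr \<epsilon> / 6 powr \<epsilon>" by (rule powr_divide)
  moreover have "6 powr (- \<epsilon>) = inverse (6 powr \<epsilon>)" by (rule powr_minus)
  ultimately have "6 powr (- \<epsilon>) * real N powr \<epsilon> = (real N / 6) powr \<epsilon>"
    by (simp only: divide_inverse mult.commute)
  then show ?thesis using 1 by simp
qed

lemma orient:
  assumes "ort s > 0" "A \<in> fc s" "B \<in> fc s" "A \<noteq> B"
  shows "\<exists>w. (A,B,w) \<in> {s, rot s, rot (rot s)} \<or> (B,A,w) \<in> {s, rot s, rot (rot s)}"
proof -
  obtain p q r where s: "s = (p,q,r)" by (cases s)
  show ?thesis using assms(2,3,4) unfolding s by auto
qed

lemma rots_ins: "v \<in> {s, rot s, rot (rot s)} \<Longrightarrow> ins v = ins s \<and> ort v = ort s"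
  by auto

lemma same_side:
  assumes "s \<in> cell m T0" "s' \<in> cell m T0" "(A,B,w) \<in> {s, rot s, rot (rot s)}"
    "(A,B,w') \<in> {s', rot s', rot (rot s')}"
  shows "s = s'"
proof -
  have p: "ort s > 0" "ort s' > 0" using assms(1,2) cell_pos ort_T0 by blast+
  have "orr A B w > 0" "orr A B w' > 0" using rots_ins[OF assms(3)] rots_ins[OF assms(4)] p
    by (simp_all add: ort.simps)
  then obtain p where "ins (A,B,w) p" "ins (A,B,w') p" using overlap by blast
  then have "ins s p" "ins s' p" using rots_ins[OF assms(3)] rots_ins[OF assms(4)] by simp_all
  then show ?thesis using cell_distinct[OF ort_T0 assms(1,2)] by blast
qed

lemma three:
  assumes "s1 \<in> cell m T0" "s2 \<in> cell m T0" "s3 \<in> cell m T0" "A \<noteq> B"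
    "A \<in> fc s1" "B \<in> fc s1" "A \<in> fc s2" "B \<in> fc s2" "A \<in> fc s3" "B \<in> fc s3"
  shows "s1 = s2 \<or> s1 = s3 \<or> s2 = s3"
proof -
  have p: "ort s1 > 0" "ort s2 > 0" "ort s3 > 0" using assms(1-3) cell_pos ort_T0 by blast+
  obtain w1 where o1: "(A,B,w1) \<in> {s1, rot s1, rot (rot s1)} \<or> (B,A,w1) \<in> {s1, rot s1, rot (rot s1)}"
    using orient[OF p(1) assms(5,6,4)] by blast
  obtain w2 where o2: "(A,B,w2) \<in> {s2, rot s2, rot (rot s2)} \<or> (B,A,w2) \<in> {s2, rot s2, rot (rot s2)}"
    using orient[OF p(2) assms(7,8,4)] by blast
  obtain w3 where o3: "(A,B,w3) \<in> {s3, rot s3, rot (rot s3)} \<or> (B,A,w3) \<in> {s3, rot s3, rot (rot s3)}"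
    using orient[OF p(3) assms(9,10,4)] by blast
  note ss = same_side[OF assms(1) assms(2)] same_side[OF assms(1) assms(3)] same_side[OF assms(2) assms(3)]
  from o1 o2 o3 show ?thesis
    by (elim disjE) (metis ss)+
qed

lemma hexV_F: "f \<in> hexV \<Longrightarrow> \<exists>n. (Lmap ^^ n) ` f \<in> F n T0"
  by (simp add: hexV_def faces_F)

lemma bijL: "bij (Lmap ^^ n)" using Lmap_bij by simp

lemma injL: "inj (Lmap ^^ n)" using bijL bij_is_inj by blast

lemma common_level:
  assumes "f \<in> hexV" "g \<in> hexV"
  shows "\<exists>m. (Lmap ^^ m) ` f \<in> F m T0 \<and> (Lmap ^^ m) ` g \<in> F m T0"
proof -
  obtain n1 n2 where "(Lmap ^^ n1) ` f \<in> F n1 T0" "(Lmap ^^ n2) ` g \<in> F n2 T0"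
    using hexV_F assms by blast
  then show ?thesis using lift[of n1 f "max n1 n2"] lift[of n2 g "max n1 n2"] by auto
qed

lemma nbr_unique:
  assumes a1: "hex_adj f g1" and a2: "hex_adj f g2" and e: "f \<inter> g1 = f \<inter> g2"
  shows "g1 = g2"
proof (rule ccontr)
  assume ne: "g1 \<noteq> g2"
  have hv: "f \<in> hexV" "g1 \<in> hexV" "g2 \<in> hexV" using a1 a2 by (auto simp: hex_adj_def)
  obtain m1 where m1: "(Lmap ^^ m1) ` f \<in> F m1 T0" "(Lmap ^^ m1) ` g1 \<in> F m1 T0"
    using common_level[OF hv(1,2)] by blast
  obtain m2 where m2: "(Lmap ^^ m2) ` g2 \<in> F m2 T0" using hexV_F hv(3) by blast
  define m where "m = max m1 m2"
  define h where "h = Lmap ^^ m"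
  have inH: "h ` f \<in> F m T0" "h ` g1 \<in> F m T0" "h ` g2 \<in> F m T0"
    unfolding h_def m_def using lift m1 m2 by auto
  obtain s1 where s1: "s1 \<in> cell m T0" "h ` f = fc s1" using inH(1) unfolding F_def by blast
  obtain s2 where s2: "s2 \<in> cell m T0" "h ` g1 = fc s2" using inH(2) unfolding F_def by blast
  obtain s3 where s3: "s3 \<in> cell m T0" "h ` g2 = fc s3" using inH(3) unfolding F_def by blast
  have "card (f \<inter> g1) = 2" using a1 by (simp add: hex_adj_def)
  then obtain a b where ab: "f \<inter> g1 = {a,b}" "a \<noteq> b" by (auto simp: card_2_iff)
  have inj: "inj h" unfolding h_def by (rule injL)
  have AB: "h a \<noteq> h b" using ab(2) inj by (auto dest: injD)
  have mem: "a \<in> f" "b \<in> f" "a \<in> g1" "b \<in> g1" "a \<in> g2" "b \<in> g2" using ab e by blast+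
  have i1: "h a \<in> fc s1" "h b \<in> fc s1" using s1(2) mem imageI[of _ f h] by metis+
  have i2: "h a \<in> fc s2" "h b \<in> fc s2" using s2(2) mem imageI[of _ g1 h] by metis+
  have i3: "h a \<in> fc s3" "h b \<in> fc s3" using s3(2) mem imageI[of _ g2 h] by metis+
  have "s1 = s2 \<or> s1 = s3 \<or> s2 = s3"
    by (rule three[OF s1(1) s2(1) s3(1) AB i1 i2 i3])
  then have "h ` f = h ` g1 \<or> h ` f = h ` g2 \<or> h ` g1 = h ` g2" using s1 s2 s3 by auto
  then have "f = g1 \<or> f = g2 \<or> g1 = g2" using inj by (simp add: inj_image_eq_iff)
  then show False using ne a1 a2 by (auto simp: hex_adj_def)
qed


lemma finite_hexV: "f \<in> hexV \<Longrightarrow> finite f"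
proof -
  assume "f \<in> hexV"
  then obtain n where "(Lmap ^^ n) ` f \<in> F n T0" using hexV_F by blast
  then obtain s where "(Lmap ^^ n) ` f = fc s" unfolding F_def by blast
  then have "finite ((Lmap ^^ n) ` f)" by (cases s) simp
  moreover have "inj_on (Lmap ^^ n) f" by (rule inj_on_subset[OF injL subset_UNIV])
  ultimately show "finite f" by (rule finite_imageD)
qed

lemma finite_nbr: "f \<in> hexV \<Longrightarrow> finite {g. hex_adj f g}"
proof -
  assume f: "f \<in> hexV"
  have "inj_on (\<lambda>g. f \<inter> g) {g. hex_adj f g}"
  proof (rule inj_onI)
    fix g1 g2 assume "g1 \<in> {g. hex_adj f g}" "g2 \<in> {g. hex_adj f g}" "f \<inter> g1 = f \<inter> g2"
    then show "g1 = g2" using nbr_unique[of f g1 g2] by simp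
  qed
  moreover have "(\<lambda>g. f \<inter> g) ` {g. hex_adj f g} \<subseteq> Pow f" by auto
  moreover have "finite (Pow f)" using finite_hexV[OF f] by simp
  ultimately show ?thesis by (rule inj_on_finite)
qed

lemma finite_eb: "J \<subseteq> hexV \<Longrightarrow> finite J \<Longrightarrow> finite (edge_boundary J)"
proof -
  assume J: "J \<subseteq> hexV" "finite J"
  have "edge_boundary J \<subseteq> (\<lambda>(f,g). {f,g}) ` (SIGMA f:J. {g. hex_adj f g})"
  proof
    fix e assume "e \<in> edge_boundary J"
    then obtain f g where fg: "e = {f,g}" "hex_adj f g" "f \<in> J" "g \<notin> J"
      unfolding edge_boundary_def by blast
    have "(f,g) \<in> (SIGMA f:J. {g. hex_adj f g})" using fg by blast
    then show "e \<in> (\<lambda>(f,g). {f,g}) ` (SIGMA f:J. {g. hex_adj f g})"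
      using fg(1) by (intro image_eqI[of _ _ "(f,g)"]) simp_all
  qed
  moreover have "finite (SIGMA f:J. {g. hex_adj f g})"
  proof (rule finite_SigmaI)
    show "finite J" using J(2) .
    fix f assume "f \<in> J"
    then show "finite {g. hex_adj f g}" using J(1) finite_nbr by blast
  qed
  ultimately show ?thesis by (meson finite_imageI finite_subset)
qed

lemma eb_lower:
  fixes J :: "complex set set" and M :: nat
  assumes J: "J \<subseteq> hexV" "finite J"
  defines "h \<equiv> Lmap ^^ M"
  defines "X \<equiv> image h ` J"
  shows "card (B2 X (F M T0) (F M T0)) \<le> card (edge_boundary J)"
proof -
  have inj: "inj h" and surj: "surj h" unfolding h_def using bijL bij_is_inj bij_is_surj by blast+
  define \<psi> where "\<psi> p = {h -` fst p, h -` snd p}" for p :: "complex set \<times> complex set"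
  have mem: "h -` fst p \<in> J \<and> h -` snd p \<notin> J \<and> \<psi> p \<in> edge_boundary J"
    if p: "p \<in> B2 X (F M T0) (F M T0)" for p
  proof -
    obtain Fa Ga where pe: "p = (Fa, Ga)" by (cases p)
    have pp: "Fa \<in> X" "Ga \<in> F M T0" "Ga \<notin> X" "card (Fa \<inter> Ga) = 2" using p pe by (auto simp: B2_def)
    obtain f0 where f0: "f0 \<in> J" "Fa = h ` f0" using pp(1) unfolding X_def by blast
    have e1: "h -` Fa = f0" using f0(2) inj by (simp add: inj_vimage_image_eq)
    define g where "g = h -` Ga"
    have hg: "h ` g = Ga" unfolding g_def using surj by (rule surj_image_vimage_eq)
    have gV: "g \<in> hexV" unfolding hexV_def using hg pp(2) by (auto simp: faces_F h_def)
    have gJ: "g \<notin> J" using hg pp(3) unfolding X_def by blast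
    have "card (f0 \<inter> g) = card (h -` (Fa \<inter> Ga))" using e1 unfolding g_def by (simp add: vimage_Int)
    also have "\<dots> = card (Fa \<inter> Ga)" using inj surj by (intro card_vimage_inj) auto
    finally have c2: "card (f0 \<inter> g) = 2" using pp(4) by simp
    have "hex_adj f0 g" unfolding hex_adj_def using J(1) f0(1) gV gJ c2 by auto
    then have "\<psi> p \<in> edge_boundary J" unfolding edge_boundary_def \<psi>_def pe using e1 f0(1) gJ
      by (auto simp: g_def)
    then show ?thesis using e1 f0(1) gJ pe by (simp add: g_def)
  qed
  have "inj_on \<psi> (B2 X (F M T0) (F M T0))"
  proof (rule inj_onI)
    fix p q assume pq: "p \<in> B2 X (F M T0) (F M T0)" "q \<in> B2 X (F M T0) (F M T0)" "\<psi> p = \<psi> q"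
    have "h -` fst p = h -` fst q \<and> h -` snd p = h -` snd q"
      using mem[OF pq(1)] mem[OF pq(2)] pq(3) unfolding \<psi>_def doubleton_eq_iff by auto
    then have "h ` (h -` fst p) = h ` (h -` fst q)" "h ` (h -` snd p) = h ` (h -` snd q)" by simp_all
    then show "p = q" using surj by (simp add: surj_image_vimage_eq prod_eq_iff)
  qed
  moreover have "\<psi> ` B2 X (F M T0) (F M T0) \<subseteq> edge_boundary J" using mem by blast
  ultimately show ?thesis using card_inj_on_le finite_eb[OF J] by blast
qed

theorem lemma5p4:
  shows "\<exists>k>0. \<exists>\<epsilon>>0. \<forall>J. J \<subseteq> hexV \<and> finite J \<and> J \<noteq> {} \<longrightarrow>
           real (card (edge_boundary J)) \<ge> k * real (card J) powr \<epsilon>"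
proof (intro exI conjI allI impI)
  define \<epsilon> :: real where "\<epsilon> = 1 / (1 + log 2 6)"
  show "(6::real) powr (- \<epsilon>) > 0" by simp
  have "log 2 6 > (0::real)" by simp
  then have h: "0 < 1 + log 2 (6::real)" by linarith
  show "\<epsilon> > 0" unfolding \<epsilon>_def by (rule divide_pos_pos[OF zero_less_one h])
  fix J assume J: "J \<subseteq> hexV \<and> finite J \<and> J \<noteq> {}"
  have "\<forall>f\<in>J. \<exists>n. (Lmap ^^ n) ` f \<in> F n T0" using J hexV_F by blast
  then obtain lv where lv: "\<forall>f\<in>J. (Lmap ^^ lv f) ` f \<in> F (lv f) T0" by (rule bchoice[elim_format]) blast
  define n where "n = Max (lv ` J)"
  have lvn: "(Lmap ^^ n) ` f \<in> F n T0" if "f \<in> J" for f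
    using lift[of "lv f" f n] lv that J unfolding n_def by simp
  define h where "h = Lmap ^^ (n + 2)"
  define X where "X = image h ` J"
  have XF: "X \<subseteq> F n (ch 0 (ch 0 T0))" unfolding X_def h_def using lvn lift2 by blast
  have Xne: "X \<noteq> {}" unfolding X_def using J by simp
  have "inj h" unfolding h_def by (rule injL)
  then have "inj_on (image h) J" by (simp add: inj_on_def inj_image_eq_iff)
  then have cX: "card X = card J" unfolding X_def by (rule card_image)
  obtain L where L: "2 ^ L \<le> card (B2 X (F (n+2) T0) (F (n+2) T0))"
    "card X \<le> card (B2 X (F (n+2) T0) (F (n+2) T0)) * 6 ^ Suc L"
    using comb[OF XF Xne] by blast
  have b: "card (B2 X (F (n+2) T0) (F (n+2) T0)) \<le> card (edge_boundary J)"
    using eb_lower[of J "n+2"] J unfolding X_def h_def by blast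
  have N1: "card J \<ge> 1" using J by (simp add: Suc_leI card_gt_0_iff)
  have "6 powr (- \<epsilon>) * real (card J) powr \<epsilon> \<le> real (card (B2 X (F (n+2) T0) (F (n+2) T0)))"
    using final_real[OF L(1), of "card J"] L(2) cX N1 unfolding \<epsilon>_def by simp
  also have "\<dots> \<le> real (card (edge_boundary J))" using b by simp
  finally show "6 powr (- \<epsilon>) * real (card J) powr \<epsilon> \<le> real (card (edge_boundary J))" .
qed


end
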